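(* Let $N\geq 1$ be an integer and let $\mathrm{Mat}_2(\mathbb{Z},N)$ denote the set of $2\times 2$ matrices with entries in $[-N,N]\cap\mathbb{Z}$. Write \[ A=\begin{pmatrix} a_1 & a_2\\ a_3 & a_4\end{pmatrix},\qquad B=\begin{pmatrix} b_1 & b_2\\ b_3 & b_4\end{pmatrix}, \] and set \[ \Gamma=\{(A,B)\in\mathrm{Mat}_2(\mathbb{Z},N)^2 : AB=BA\},\qquad \Gamma'=\{(A,B)\in\Gamma : a_2b_2a_3b_3\neq 0\}. \] Then \[ |\Gamma\setminus\Gamma'| = 2(2N)^5 + O(N^4\log N). \]
   Context: The implied constant in the $O$-term is absolute. The set $\Gamma\setminus\Gamma'$ consists of the commuting pairs of $2\times 2$ integer matrices with entries bounded by $N$ in absolute value for which at least one of the off-diagonal entries $a_2,a_3,b_2,b_3$ vanishes. *)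

theory Defs
  imports "HOL-Analysis.Analysis" "HOL-Library.Landau_Symbols"
begin

text \<open>2x2 integer matrices with entries in [-N,N]. Index 1 = first row/column,
  so A$1$2 = a_2 and A$2$1 = a_3.\<close>
definition Mat2 :: "int \<Rightarrow> (int^2^2) set" where
  "Mat2 N = {A. \<forall>i j. \<bar>A$i$j\<bar> \<le> N}"

definition Gamma :: "int \<Rightarrow> ((int^2^2) \<times> (int^2^2)) set" where
  "Gamma N = {(A,B). A \<in> Mat2 N \<and> B \<in> Mat2 N \<and> A ** B = B ** A}"

definition Gamma' :: "int \<Rightarrow> ((int^2^2) \<times> (int^2^2)) set" where
  "Gamma' N = {(A,B) \<in> Gamma N. A$1$2 * B$1$2 * A$2$1 * B$2$1 \<noteq> 0}"

end

theory Submission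
  imports Defs
begin


definition mk :: "int \<Rightarrow> int \<Rightarrow> int \<Rightarrow> int \<Rightarrow> int^2^2" where
  "mk a b c d = (\<chi> i j. if i = 1 then (if j = 1 then a else b) else (if j = 1 then c else d))"

lemma mk_nth [simp]: "mk a b c d $ 1 $ 1 = a" "mk a b c d $ 1 $ 2 = b"
  "mk a b c d $ 2 $ 1 = c" "mk a b c d $ 2 $ 2 = d"
  by (simp_all add: mk_def)

lemma mk_eta: "A = mk (A$1$1) (A$1$2) (A$2$1) (A$2$2)"
  by (simp add: vec_eq_iff forall_2 mk_def)

lemma mk_eq_iff: "mk a b c d = mk a' b' c' d' \<longleftrightarrow> a = a' \<and> b = b' \<and> c = c' \<and> d = d'"
  by (metis mk_nth)

lemma mk_mult: "mk a b c d ** mk e f g h = mk (a*e+b*g) (a*f+b*h) (c*e+d*g) (c*f+d*h)"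
  by (simp add: matrix_matrix_mult_def vec_eq_iff forall_2 sum_2 mk_def)

lemma mk_Mat2: "mk a b c d \<in> Mat2 N \<longleftrightarrow> \<bar>a\<bar> \<le> N \<and> \<bar>b\<bar> \<le> N \<and> \<bar>c\<bar> \<le> N \<and> \<bar>d\<bar> \<le> N"
  by (auto simp add: Mat2_def forall_2)

lemma mk_comm: "mk a1 a2 a3 a4 ** mk b1 b2 b3 b4 = mk b1 b2 b3 b4 ** mk a1 a2 a3 a4 \<longleftrightarrow>
   a2*b3 = b2*a3 \<and> b2*(a1-a4) = a2*(b1-b4) \<and> a3*(b1-b4) = b3*(a1-a4)"
  unfolding mk_mult mk_eq_iff by (auto simp: algebra_simps)



definition Q4 :: "int \<Rightarrow> (int \<times> int \<times> int \<times> int) set" where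
  "Q4 M = {(x,y,z,w). \<bar>x\<bar> \<le> M \<and> \<bar>y\<bar> \<le> M \<and> \<bar>z\<bar> \<le> M \<and> \<bar>w\<bar> \<le> M \<and>
     x*w = y*z \<and> (x \<noteq> 0 \<or> z \<noteq> 0) \<and> (y \<noteq> 0 \<or> w \<noteq> 0)}"

definition PP :: "int \<Rightarrow> _" where
  "PP N = (\<lambda>(s,B). (mk s 0 0 s, B)) ` ({-N..N} \<times> Mat2 N)"
definition QQ :: "int \<Rightarrow> _" where
  "QQ N = (\<lambda>(s,A). (A, mk s 0 0 s)) ` ({-N..N} \<times> Mat2 N)"
definition DD :: "int \<Rightarrow> _" where
  "DD N = {-N..N} \<times> {-N..N} \<times> Q4 (2*N)"
definition Fl :: "int \<times> int \<times> int \<times> int \<times> int \<times> int \<Rightarrow> _" where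
  "Fl = (\<lambda>(a4,b4,x,y,z,w). (mk (a4+z) 0 x a4, mk (b4+w) 0 y b4))"
definition Fu :: "int \<times> int \<times> int \<times> int \<times> int \<times> int \<Rightarrow> _" where
  "Fu = (\<lambda>(a4,b4,x,y,z,w). (mk (a4+z) x 0 a4, mk (b4+w) y 0 b4))"

lemma PQ_sub: "PP N \<union> QQ N \<subseteq> Gamma N - Gamma' N"
proof -
  have "mk s 0 0 s \<in> Mat2 N" if "s \<in> {-N..N}" for s using that by (auto simp: mk_Mat2)
  moreover have "mk s 0 0 s ** B = B ** mk s 0 0 s" for s B
    by (subst (2 4) mk_eta) (simp only: mk_comm, simp)
  ultimately show ?thesis
    unfolding PP_def QQ_def Gamma_def Gamma'_def by auto
qed

lemma main_sub: "Gamma N - Gamma' N \<subseteq> PP N \<union> QQ N \<union> Fl ` DD N \<union> Fu ` DD N"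
proof
  fix p assume p: "p \<in> Gamma N - Gamma' N"
  obtain A B where pAB: "p = (A,B)" by fastforce
  define a1 a2 a3 a4 b1 b2 b3 b4 where "a1 = A$1$1" "a2 = A$1$2" "a3 = A$2$1" "a4 = A$2$2"
    "b1 = B$1$1" "b2 = B$1$2" "b3 = B$2$1" "b4 = B$2$2"
  have A: "A = mk a1 a2 a3 a4" and B: "B = mk b1 b2 b3 b4"
    unfolding a1_a2_a3_a4_b1_b2_b3_b4_def by (rule mk_eta)+
  from p have AM: "A \<in> Mat2 N" and BM: "B \<in> Mat2 N" and c: "A ** B = B ** A"
    and z: "a2 * b2 * a3 * b3 = 0"
    by (auto simp: pAB Gamma_def Gamma'_def a1_a2_a3_a4_b1_b2_b3_b4_def)
  from AM BM have bnd: "\<bar>a1\<bar> \<le> N" "\<bar>a2\<bar> \<le> N" "\<bar>a3\<bar> \<le> N" "\<bar>a4\<bar> \<le> N"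
     "\<bar>b1\<bar> \<le> N" "\<bar>b2\<bar> \<le> N" "\<bar>b3\<bar> \<le> N" "\<bar>b4\<bar> \<le> N"
    by (auto simp: A B mk_Mat2)
  from c have e1: "a2*b3 = b2*a3" and e2: "b2*(a1-a4) = a2*(b1-b4)" and e3: "a3*(b1-b4) = b3*(a1-a4)"
    unfolding A B mk_comm by auto
  show "p \<in> PP N \<union> QQ N \<union> Fl ` DD N \<union> Fu ` DD N"
  proof (cases "a2 = 0 \<and> a3 = 0 \<and> a1 = a4")
    case True
    then have "p \<in> PP N" unfolding PP_def pAB A using BM bnd
      by (auto simp: B intro!: image_eqI[where x="(a4, mk b1 b2 b3 b4)"])
    then show ?thesis by blast
  next
    case nA: False
    show ?thesis
    proof (cases "b2 = 0 \<and> b3 = 0 \<and> b1 = b4")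
      case True
      then have "p \<in> QQ N" unfolding QQ_def pAB B using AM bnd
        by (auto simp: A intro!: image_eqI[where x="(b4, mk a1 a2 a3 a4)"])
      then show ?thesis by blast
    next
      case nB: False
      show ?thesis
      proof (cases "a2 = 0 \<or> b2 = 0")
        case True
        then have "a2 = 0 \<and> b2 = 0" using nA nB e1 e2 by auto
        then have "p = Fl (a4, b4, a3, b3, a1-a4, b1-b4)" and
          "(a4, b4, a3, b3, a1-a4, b1-b4) \<in> DD N"
          using nA nB e3 bnd by (auto simp: Fl_def pAB A B DD_def Q4_def algebra_simps)
        then show ?thesis by blast
      next
        case False
        then have "a3 = 0 \<or> b3 = 0" using z by auto
        then have "a3 = 0 \<and> b3 = 0" using nA nB e1 e3 by auto
        then have "p = Fu (a4, b4, a2, b2, a1-a4, b1-b4)" and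
          "(a4, b4, a2, b2, a1-a4, b1-b4) \<in> DD N"
          using nA nB e2 bnd by (auto simp: Fu_def pAB A B DD_def Q4_def algebra_simps)
        then show ?thesis by blast
      qed
    qed
  qed
qed



lemma card_S: "card {-int n..int n} = 2*n+1" by simp
lemma nat_S [simp]: "nat (2 * int n + 1) = 2*n+1" by simp

lemma Mat2_img: "Mat2 N = (\<lambda>(a,b,c,d). mk a b c d) ` ({-N..N} \<times> {-N..N} \<times> {-N..N} \<times> {-N..N})"
proof -
  have "A \<in> (\<lambda>(a,b,c,d). mk a b c d) ` ({-N..N} \<times> {-N..N} \<times> {-N..N} \<times> {-N..N})" if "A \<in> Mat2 N" for A
  proof -
    have h: "\<And>i j. \<bar>A$i$j\<bar> \<le> N" using that by (simp add: Mat2_def)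
    show ?thesis using h[of 1 1] h[of 1 2] h[of 2 1] h[of 2 2]
      by (intro image_eqI[where x="(A$1$1, A$1$2, A$2$1, A$2$2)"]) (auto simp: abs_le_iff intro: mk_eta)
  qed
  then show ?thesis by (auto simp: mk_Mat2 abs_le_iff)
qed

lemma card_Mat2: "card (Mat2 (int n)) = (2*n+1)^4"
proof -
  have "inj_on (\<lambda>(a,b,c,d). mk a b c d) X" for X by (auto simp: inj_on_def mk_eq_iff)
  then show ?thesis unfolding Mat2_img
    by (subst card_image) (simp_all only: card_cartesian_product card_S power4_eq_xxxx)
qed

lemma finite_Mat2: "finite (Mat2 N)" unfolding Mat2_img by simp

lemma finite_Q4: "finite (Q4 M)"
  by (rule finite_subset[of _ "{-M..M} \<times> {-M..M} \<times> {-M..M} \<times> {-M..M}"]) (auto simp: Q4_def abs_le_iff)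

lemma card_PP: "card (PP (int n)) = (2*n+1)^5"
proof -
  have inj: "inj_on (\<lambda>(s,B). (mk s 0 0 s, B)) ({-int n..int n} \<times> Mat2 (int n))" by (auto simp: inj_on_def mk_eq_iff)
  show ?thesis unfolding PP_def
    by (simp add: card_image[OF inj] card_cartesian_product card_Mat2 power_Suc[symmetric] del: power_Suc)
qed

lemma card_QQ: "card (QQ (int n)) = (2*n+1)^5"
proof -
  have inj: "inj_on (\<lambda>(s,A). (A, mk s 0 0 s)) ({-int n..int n} \<times> Mat2 (int n))" by (auto simp: inj_on_def mk_eq_iff)
  show ?thesis unfolding QQ_def
    by (simp add: card_image[OF inj] card_cartesian_product card_Mat2 power_Suc[symmetric] del: power_Suc)
qed

lemma card_PQ: "card (PP (int n) \<inter> QQ (int n)) \<le> (2*n+1)^2"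
proof -
  have "PP (int n) \<inter> QQ (int n) \<subseteq> (\<lambda>(s,t). (mk s 0 0 s, mk t 0 0 t)) ` ({-int n..int n} \<times> {-int n..int n})"
    unfolding PP_def QQ_def by (auto simp: mk_eq_iff)
  then have "card (PP (int n) \<inter> QQ (int n)) \<le> card ((\<lambda>(s,t). (mk s 0 0 s, mk t 0 0 t)) ` ({-int n..int n} \<times> {-int n..int n}))"
    by (intro card_mono) auto
  also have "\<dots> \<le> card ({-int n..int n} \<times> {-int n..int n})" by (rule card_image_le) auto
  also have "\<dots> = (2*n+1)^2" by (simp add: card_cartesian_product power2_eq_square del: atLeastAtMost_iff)
  finally show ?thesis .
qed

lemma card_DD: "card (DD (int n)) = (2*n+1)^2 * card (Q4 (2 * int n))"
  unfolding DD_def by (simp only: card_cartesian_product card_S power2_eq_square mult.assoc)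

lemma finite_Gamma: "finite (Gamma N)"
  by (rule finite_subset[of _ "Mat2 N \<times> Mat2 N"]) (auto simp: Gamma_def finite_Mat2)

lemma lower: "card (Gamma (int n) - Gamma' (int n)) + (2*n+1)^2 \<ge> 2 * (2*n+1)^5"
proof -
  have fin: "finite (PP (int n))" "finite (QQ (int n))" unfolding PP_def QQ_def by (auto simp: finite_Mat2)
  have "card (PP (int n) \<union> QQ (int n)) \<le> card (Gamma (int n) - Gamma' (int n))"
    by (intro card_mono PQ_sub) (auto simp: finite_Gamma)
  moreover have "card (PP (int n) \<union> QQ (int n)) + card (PP (int n) \<inter> QQ (int n)) = 2 * (2*n+1)^5"
    using card_Un_Int[OF fin] card_PP card_QQ by simp
  ultimately show ?thesis using card_PQ[of n] by linarith
qed

lemma upper: "card (Gamma (int n) - Gamma' (int n)) \<le> 2 * (2*n+1)^5 + 2 * ((2*n+1)^2 * card (Q4 (2 * int n)))"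
proof -
  have fD: "finite (DD (int n))" unfolding DD_def by (simp add: finite_Q4)
  have "card (Gamma (int n) - Gamma' (int n)) \<le> card (PP (int n) \<union> QQ (int n) \<union> Fl ` DD (int n) \<union> Fu ` DD (int n))"
    by (intro card_mono main_sub) (auto simp: PP_def QQ_def finite_Mat2 fD)
  also have "\<dots> \<le> card (PP (int n)) + card (QQ (int n)) + card (Fl ` DD (int n)) + card (Fu ` DD (int n))"
    by (meson card_Un_le le_trans add_le_mono order_refl)
  also have "\<dots> \<le> card (PP (int n)) + card (QQ (int n)) + card (DD (int n)) + card (DD (int n))"
    by (intro add_mono card_image_le fD order_refl)
  finally show ?thesis by (simp add: card_PP card_QQ card_DD)
qed



lemma factor4:
  fixes x y z w :: int
  assumes nz: "x \<noteq> 0" "z \<noteq> 0" and e: "x * w = y * z"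
  shows "\<exists>u v g t. g \<ge> 1 \<and> x = g * u \<and> y = g *  v \<and> z = u * t \<and> w = v * t"
proof -
  define g where "g = gcd x y"
  have gpos: "g > 0" using nz by (simp add: g_def)
  define u where "u = x div g"
  define v where "v = y div g"
  have xu: "x = g * u" and yv: "y = g *  v" by (simp_all add: g_def u_def v_def)
  have cop: "coprime u v" using nz unfolding u_def v_def g_def by (metis div_gcd_coprime)
  have "g * (u * w) = g * (v * z)" using e xu yv by (simp add: algebra_simps)
  then have uw: "u * w = v * z" using gpos by simp
  then have "u dvd v * z" by (metis dvd_triv_left)
  then have "u dvd z" using cop by (metis coprime_dvd_mult_right_iff)
  then obtain t where zt: "z = u * t" by blast
  have u0: "u \<noteq> 0" using nz xu by auto
  have "u * w = u * (v * t)" using uw zt by (simp add: algebra_simps)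
  then have "w = v * t" using u0 by simp
  then show ?thesis using gpos xu yv zt by (intro exI[of _ u] exI[of _ v] exI[of _ g] exI[of _ t]) auto
qed

definition TT :: "int \<Rightarrow> (int \<times> int \<times> int \<times> int) set" where
  "TT M = {(u,v,g,t). u \<noteq> 0 \<and> v \<noteq> 0 \<and> t \<noteq> 0 \<and> g \<ge> 1 \<and> \<bar>g * u\<bar> \<le> M \<and> \<bar>g *  v\<bar> \<le> M \<and> \<bar>u * t\<bar> \<le> M \<and> \<bar>v * t\<bar> \<le> M}"

definition ff :: "int \<times> int \<times> int \<times> int \<Rightarrow> int \<times> int \<times> int \<times> int" where
  "ff = (\<lambda>(u,v,g,t). (g * u, g *  v, u * t, v * t))"

definition ZZ :: "int \<Rightarrow> (int \<times> int \<times> int \<times> int) set" where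
  "ZZ M = ({0}\<times>{0}\<times>{-M..M}\<times>{-M..M}) \<union> ({-M..M}\<times>{-M..M}\<times>{0}\<times>{0})"

lemma Q4_sub: "Q4 M \<subseteq> ZZ M \<union> ff ` TT M"
proof
  fix p assume p: "p \<in> Q4 M"
  obtain x y z w where pe: "p = (x,y,z,w)" by (cases p) auto
  from p have b: "\<bar>x\<bar> \<le> M" "\<bar>y\<bar> \<le> M" "\<bar>z\<bar> \<le> M" "\<bar>w\<bar> \<le> M" and e: "x * w = y * z"
    and n1: "x \<noteq> 0 \<or> z \<noteq> 0" and n2: "y \<noteq> 0 \<or> w \<noteq> 0" by (auto simp: Q4_def pe)
  show "p \<in> ZZ M \<union> ff ` TT M"
  proof (cases "x = 0 \<or> z = 0")
    case True
    then have "(x = 0 \<and> y = 0) \<or> (z = 0 \<and> w = 0)" using n1 e by auto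
    then show ?thesis using b by (auto simp: pe ZZ_def abs_le_iff)
  next
    case False
    then have nz: "x \<noteq> 0" "z \<noteq> 0" by auto
    have "y \<noteq> 0" using nz n2 e by auto
    have "w \<noteq> 0" using nz n2 e by auto
    obtain u v g t where h: "g \<ge> 1" "x = g * u" "y = g *  v" "z = u * t" "w = v * t"
      using factor4[OF nz e] by blast
    have "(u,v,g,t) \<in> TT M" using h b nz \<open>y \<noteq> 0\<close> \<open>w \<noteq> 0\<close> by (auto simp: TT_def)
    moreover have "p = ff (u,v,g,t)" using h by (simp add: pe ff_def)
    ultimately show ?thesis by blast
  qed
qed

definition S1 :: "int \<Rightarrow> (int \<times> int \<times> int \<times> int) set" where
  "S1 M = (SIGMA u:({-M..M}-{0}). {-\<bar>u\<bar>..\<bar>u\<bar>} \<times> {1..M div \<bar>u\<bar>} \<times> {-(M div \<bar>u\<bar>)..M div \<bar>u\<bar>})"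

lemma div_bound: "(a::int) > 0 \<Longrightarrow> g  *  a \<le> M \<Longrightarrow> g \<le> M div a"
  using zdiv_mono1[of "g * a" M a] by simp

lemma T1_sub: "{(u,v,g,t). (u,v,g,t) \<in> TT M \<and> \<bar>v\<bar> \<le> \<bar>u\<bar>} \<subseteq> S1 M"
proof clarify
  fix u v g t assume a: "(u,v,g,t) \<in> TT M" "\<bar>v\<bar> \<le> \<bar>u\<bar>"
  then have h: "u \<noteq> 0" "t \<noteq> 0" "g \<ge> 1" "g * \<bar>u\<bar> \<le> M" "\<bar>t\<bar> * \<bar>u\<bar> \<le> M"
    by (auto simp: TT_def abs_mult mult.commute)
  have ug: "\<bar>u\<bar> \<le> g * \<bar>u\<bar>" using h by simp
  have "\<bar>u\<bar> \<le> M" using h ug by linarith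
  moreover have "g \<le> M div \<bar>u\<bar>" using div_bound[of "\<bar>u\<bar>" g M] h by simp
  moreover have "\<bar>t\<bar> \<le> M div \<bar>u\<bar>" using div_bound[of "\<bar>u\<bar>" "\<bar>t\<bar>" M] h by simp
  ultimately show "(u,v,g,t) \<in> S1 M" using a(2) h by (auto simp: S1_def abs_le_iff)
qed

lemma T2_sub: "{(u,v,g,t). (u,v,g,t) \<in> TT M \<and> \<bar>u\<bar> \<le> \<bar>v\<bar>} \<subseteq> (\<lambda>(u,v,g,t). (v,u,g,t)) ` S1 M"
proof clarify
  fix u v g t assume a: "(u,v,g,t) \<in> TT M" "\<bar>u\<bar> \<le> \<bar>v\<bar>"
  then have "(v,u,g,t) \<in> TT M" by (auto simp: TT_def)
  then have "(v,u,g,t) \<in> S1 M" using T1_sub[of M] a(2) by blast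
  then show "(u,v,g,t) \<in> (\<lambda>(u,v,g,t). (v,u,g,t)) ` S1 M" by force
qed

lemma finite_S1: "finite (S1 M)" unfolding S1_def by (intro finite_SigmaI) auto

lemma card_Q4_S1: "card (Q4 M) \<le> 2  *  nat (2 * M+1)^2 + 2  *  card (S1 M)"
proof -
  have fT: "finite (TT M)"
  proof -
    have "TT M \<subseteq> {(u,v,g,t). (u,v,g,t) \<in> TT M \<and> \<bar>v\<bar> \<le> \<bar>u\<bar>} \<union> {(u,v,g,t). (u,v,g,t) \<in> TT M \<and> \<bar>u\<bar> \<le> \<bar>v\<bar>}"
      by auto
    also have "\<dots> \<subseteq> S1 M \<union> (\<lambda>(u,v,g,t). (v,u,g,t)) ` S1 M" using T1_sub T2_sub by blast
    finally show ?thesis by (rule finite_subset) (simp add: finite_S1)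
  qed
  have "card (TT M) \<le> card ({(u,v,g,t). (u,v,g,t) \<in> TT M \<and> \<bar>v\<bar> \<le> \<bar>u\<bar>} \<union> {(u,v,g,t). (u,v,g,t) \<in> TT M \<and> \<bar>u\<bar> \<le> \<bar>v\<bar>})"
    by (intro card_mono) (auto intro: finite_subset[OF _ fT])
  also have "\<dots> \<le> card {(u,v,g,t). (u,v,g,t) \<in> TT M \<and> \<bar>v\<bar> \<le> \<bar>u\<bar>} + card {(u,v,g,t). (u,v,g,t) \<in> TT M \<and> \<bar>u\<bar> \<le> \<bar>v\<bar>}"
    by (rule card_Un_le)
  also have "\<dots> \<le> card (S1 M) + card ((\<lambda>(u,v,g,t). (v,u,g,t)) ` S1 M)"
    by (intro add_mono card_mono T1_sub T2_sub finite_S1) (simp add: finite_S1)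
  also have "\<dots> \<le> card (S1 M) + card (S1 M)" by (intro add_mono card_image_le finite_S1 order_refl)
  finally have cT: "card (TT M) \<le> 2  *  card (S1 M)" by simp
  have cZ: "card (ZZ M) \<le> 2  *  nat (2 * M+1)^2"
  proof -
    have "card (ZZ M) \<le> card ({0::int}\<times>{0::int}\<times>{-M..M}\<times>{-M..M}) + card ({-M..M}\<times>{-M..M}\<times>{0::int}\<times>{0::int})"
      unfolding ZZ_def by (rule card_Un_le)
    also have "\<dots> = 2  *  nat (2 * M+1)^2" by (simp add: card_cartesian_product power2_eq_square)
    finally show ?thesis .
  qed
  have "card (Q4 M) \<le> card (ZZ M \<union> ff ` TT M)"
    by (intro card_mono Q4_sub) (auto simp: ZZ_def fT)
  also have "\<dots> \<le> card (ZZ M) + card (ff ` TT M)" by (rule card_Un_le)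
  also have "\<dots> \<le> card (ZZ M) + card (TT M)" by (intro add_mono card_image_le fT order_refl)
  finally show ?thesis using cT cZ by linarith
qed



lemma harm_bound: "m \<ge> 1 \<Longrightarrow> (\<Sum>k=1..m. 1 / real k) \<le> 1 + ln (real m)"
proof (induction m rule: dec_induct)
  case base then show ?case by simp
next
  case (step m)
  have m0: "real m > 0" using step by simp
  have "ln (real m / (real m + 1)) \<le> real m / (real m + 1) - 1"
    using m0 by (intro ln_le_minus_one) auto
  also have "\<dots> = - 1 / (real m + 1)" using m0 by (simp add: field_simps)
  finally have "ln (real m) - ln (real m + 1) \<le> - 1 / (real m + 1)"
    using m0 by (simp add: ln_div)
  then have "1 / (real m + 1) \<le> ln (real m + 1) - ln (real m)" by linarith
  then have "1 / real (Suc m) \<le> ln (real (Suc m)) - ln (real m)" by (simp add: add.commute)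
  moreover have "(\<Sum>k=1..Suc m. 1 / real k) = (\<Sum>k=1..m. 1 / real k) + 1 / real (Suc m)"
    using step by simp
  ultimately show ?case using step by linarith
qed

lemma U_split: "{-int m..int m} - {0} = int ` {1..m} \<union> (\<lambda>k. - int k) ` {1..m}"
proof -
  have h: "u \<in> int ` {1..m} \<union> (\<lambda>k. - int k) ` {1..m}" if "u \<in> {-int m..int m} - {0}" for u
  proof (cases "u > 0")
    case True then show ?thesis using that by (auto intro!: image_eqI[where x="nat u"])
  next
    case False then show ?thesis using that by (auto intro!: rev_image_eqI[where x="nat (-u)"])
  qed
  show ?thesis
  proof (rule equalityI)
    show "{-int m..int m} - {0} \<subseteq> int ` {1..m} \<union> (\<lambda>k. - int k) ` {1..m}" using h by blast
  qed auto
qed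

lemma sum_U: "(\<Sum>u\<in>{-int m..int m} - {0}. 1 / real_of_int \<bar>u\<bar>) = 2 * (\<Sum>k=1..m. 1 / real k)"
proof -
  have d: "int ` {1..m} \<inter> (\<lambda>k. - int k) ` {1..m} = {}" by auto
  have i1: "inj_on int {1..m}" by simp
  have i2: "inj_on (\<lambda>k. - int k) {1..m}" by (simp add: inj_on_def)
  have s1: "(\<Sum>u\<in>int ` {1..m}. 1 / real_of_int \<bar>u\<bar>) = (\<Sum>k=1..m. 1 / real k)"
    by (subst sum.reindex[OF i1]) simp
  have s2: "(\<Sum>u\<in>(\<lambda>k. - int k) ` {1..m}. 1 / real_of_int \<bar>u\<bar>) = (\<Sum>k=1..m. 1 / real k)"
    by (subst sum.reindex[OF i2]) simp
  show ?thesis unfolding U_split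
    by (subst sum.union_disjoint[OF _ _ d]) (simp, simp, simp only: s1 s2 mult_2)
qed

lemma per_u:
  fixes a M :: int
  assumes "1 \<le> a" "a \<le> M"
  shows "real (nat (2*a+1) * (nat (M div a) * nat (2*(M div a)+1))) \<le> 9 * real_of_int M ^ 2 / real_of_int a"
proof -
  define q where "q = M div a"
  have q1: "1 \<le> q" unfolding q_def using div_bound[of a 1 M] assms by simp
  have aq: "a * q \<le> M" unfolding q_def using assms
    by (smt (verit) minus_mod_eq_mult_div pos_mod_sign)
  have h1: "a * (2*a+1) \<le> 3 * a^2" using assms by (simp add: power2_eq_square algebra_simps)
  have h2: "q * (2*q+1) \<le> 3 * q^2" using q1 by (simp add: power2_eq_square algebra_simps)
  have h3: "(a*q)^2 \<le> M^2" using aq assms q1 by (intro power_mono) auto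
  have "a * ((2*a+1) * (q * (2*q+1))) = (a * (2*a+1)) * (q * (2*q+1))" by (simp add: algebra_simps)
  also have "\<dots> \<le> (3 * a^2) * (3 * q^2)" by (rule mult_mono[OF h1 h2]) (use q1 in auto)
  also have "\<dots> = 9 * (a*q)^2" by (simp add: power_mult_distrib)
  also have "\<dots> \<le> 9 * M^2" using h3 by simp
  finally have ineq: "a * ((2*a+1) * (q * (2*q+1))) \<le> 9 * M^2" .
  have "real (nat (2*a+1) * (nat q * nat (2*q+1))) = real_of_int ((2*a+1) * (q * (2*q+1)))"
    using assms q1 by (simp add: of_nat_mult)
  also have "\<dots> \<le> 9 * real_of_int M ^ 2 / real_of_int a"
  proof -
    have "real_of_int a * real_of_int ((2*a+1) * (q * (2*q+1))) \<le> 9 * real_of_int M ^ 2"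
      using ineq by (metis (mono_tags) of_int_le_iff of_int_mult of_int_power of_int_numeral)
    then show ?thesis using assms by (simp add: field_simps)
  qed
  finally show ?thesis unfolding q_def .
qed

lemma card_S1_bound:
  assumes "m \<ge> 1"
  shows "real (card (S1 (int m))) \<le> 18 * real m ^ 2 * (1 + ln (real m))"
proof -
  let ?U = "{-int m..int m} - {0}"
  have "card (S1 (int m)) = (\<Sum>u\<in>?U. card ({-\<bar>u\<bar>..\<bar>u\<bar>} \<times> {1..int m div \<bar>u\<bar>} \<times> {-(int m div \<bar>u\<bar>)..int m div \<bar>u\<bar>}))"
    unfolding S1_def by (rule card_SigmaI) auto
  also have "\<dots> = (\<Sum>u\<in>?U. nat (2*\<bar>u\<bar>+1) * (nat (int m div \<bar>u\<bar>) * nat (2*(int m div \<bar>u\<bar>)+1)))"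
    by (intro sum.cong refl) (simp add: card_cartesian_product)
  finally have "real (card (S1 (int m))) = (\<Sum>u\<in>?U. real (nat (2*\<bar>u\<bar>+1) * (nat (int m div \<bar>u\<bar>) * nat (2*(int m div \<bar>u\<bar>)+1))))"
    by (simp only: of_nat_sum)
  also have "\<dots> \<le> (\<Sum>u\<in>?U. 9 * real_of_int (int m) ^ 2 * (1 / real_of_int \<bar>u\<bar>))"
  proof (intro sum_mono)
    fix u assume uU: "u \<in> ?U"
    have "real (nat (2*\<bar>u\<bar>+1) * (nat (int m div \<bar>u\<bar>) * nat (2*(int m div \<bar>u\<bar>)+1)))
       \<le> 9 * real_of_int (int m) ^ 2 / real_of_int \<bar>u\<bar>"
      using uU by (intro per_u) auto
    then show "real (nat (2*\<bar>u\<bar>+1) * (nat (int m div \<bar>u\<bar>) * nat (2*(int m div \<bar>u\<bar>)+1)))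
       \<le> 9 * real_of_int (int m) ^ 2 * (1 / real_of_int \<bar>u\<bar>)" by simp
  qed
  also have "\<dots> = 9 * real m ^ 2 * (2 * (\<Sum>k=1..m. 1 / real k))"
    by (subst sum_distrib_left[symmetric], subst sum_U, simp)
  also have "\<dots> \<le> 9 * real m ^ 2 * (2 * (1 + ln (real m)))"
    using harm_bound[OF assms] by (intro mult_left_mono) auto
  also have "\<dots> = 18 * real m ^ 2 * (1 + ln (real m))" by (simp add: algebra_simps)
  finally show ?thesis .
qed



lemma poly5: "(x::real) \<ge> 1 \<Longrightarrow> (2*x+1)^5 \<le> (2*x)^5 + 405 * x^4"
proof -
  assume x: "x \<ge> 1"
  have e: "(2*x+1)^5 = (2*x)^5 + 80*x^4 + 80*x^3 + 40*x^2 + 10*x + 1"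
    by (simp add: eval_nat_numeral algebra_simps)
  have "x^3 \<le> x^4" "x^2 \<le> x^4" "1 \<le> x^4"
    using x by (auto intro: power_increasing)
  moreover have "x \<le> x^4" using power_increasing[of 1 4 x] x by simp
  ultimately show ?thesis unfolding e by simp
qed

lemma main_bound:
  assumes n3: "n \<ge> 3"
  shows "\<bar>real (card (Gamma (int n) - Gamma' (int n))) - 2 * (2 * real n) ^ 5\<bar>
         \<le> 10000 * (real n ^ 4 * ln (real n))"
proof -
  define x where "x = real n"
  define L where "L = ln x"
  define X where "X = real (card (Gamma (int n) - Gamma' (int n)))"
  define cQ where "cQ = real (card (Q4 (2 * int n)))"
  have x3: "x \<ge> 3" using n3 by (simp add: x_def)
  have L1: "L \<ge> 1"
  proof -
    have "exp 1 \<le> x" using exp_le x3 by linarith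
    then have "ln (exp 1) \<le> ln x" using x3 by (subst ln_le_cancel_iff) auto
    then show ?thesis by (simp add: L_def)
  qed
  have ln2: "ln (2*x) \<le> 1 + L"
  proof -
    have "ln (2::real) \<le> 2 - 1" by (rule ln_le_minus_one) auto
    then show ?thesis using x3 by (simp add: L_def ln_mult)
  qed
  have cS: "real (card (S1 (2 * int n))) \<le> 18 * (2*x) ^ 2 * (1 + ln (2*x))"
    using card_S1_bound[of "2*n"] n3 by (simp add: x_def)
  have cQ1: "cQ \<le> 2 * (4*x+1)^2 + 2 * real (card (S1 (2 * int n)))"
  proof -
    have "card (Q4 (2 * int n)) \<le> 2 * nat (2*(2 * int n)+1)^2 + 2 * card (S1 (2 * int n))"
      by (rule card_Q4_S1)
    also have "nat (2*(2 * int n)+1) = 4*n+1" by simp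
    finally show ?thesis unfolding cQ_def x_def
      by (metis (mono_tags, lifting) of_nat_le_iff of_nat_add of_nat_mult of_nat_power of_nat_numeral of_nat_1)
  qed
  have q1: "(4*x+1)^2 \<le> 25 * x^2 * L"
  proof -
    have xx: "3*x \<le> x*x" using x3 by (intro mult_right_mono) auto
    have "(4*x+1)^2 = 16*(x*x) + 8*x + 1" by (simp add: power2_eq_square algebra_simps)
    moreover have "x^2 = x*x" by (simp add: power2_eq_square)
    ultimately have "(4*x+1)^2 \<le> 25 * x^2" using xx x3 by linarith
    also have "\<dots> \<le> 25 * x^2 * L" using L1 mult_left_mono[of 1 L "25*x^2"] by simp
    finally show ?thesis .
  qed
  have q2: "18 * (2*x) ^ 2 * (1 + ln (2*x)) \<le> 216 * x^2 * L"
  proof -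
    have "18 * (2*x) ^ 2 * (1 + ln (2*x)) \<le> 18 * (2*x) ^ 2 * (3 * L)"
      using ln2 L1 by (intro mult_left_mono) auto
    then show ?thesis by (simp add: power2_eq_square algebra_simps)
  qed
  have cQb: "cQ \<le> 482 * x^2 * L" using cQ1 cS q1 q2 by linarith
  have cQ0: "cQ \<ge> 0" by (simp add: cQ_def)
  have up: "X \<le> 2*(2*x+1)^5 + 2 * ((2*x+1)^2 * cQ)"
    using upper[of n] unfolding X_def cQ_def x_def
    by (metis (mono_tags, lifting) of_nat_le_iff of_nat_add of_nat_mult of_nat_power of_nat_numeral of_nat_1)
  have lo: "X + (2*x+1)^2 \<ge> 2*(2*x+1)^5"
    using lower[of n] unfolding X_def x_def
    by (metis (mono_tags, lifting) of_nat_le_iff of_nat_add of_nat_mult of_nat_power of_nat_numeral of_nat_1)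
  have sq: "(2*x+1)^2 \<le> 9*x^2"
  proof -
    have xx: "3*x \<le> x*x" using x3 by (intro mult_right_mono) auto
    have "(2*x+1)^2 = 4*(x*x) + 4*x + 1" by (simp add: power2_eq_square algebra_simps)
    moreover have "x^2 = x*x" by (simp add: power2_eq_square)
    ultimately show ?thesis using xx x3 by linarith
  qed
  have "(2*x+1)^2 * cQ \<le> (9*x^2) * (482 * x^2 * L)"
    using sq cQb cQ0 by (intro mult_mono) auto
  also have "\<dots> = 4338 * (x^4 * L)" by (simp add: algebra_simps power2_eq_square power4_eq_xxxx)
  finally have t1: "(2*x+1)^2 * cQ \<le> 4338 * (x^4 * L)" .
  have p5: "(2*x+1)^5 \<le> (2*x)^5 + 405 * x^4" using poly5 x3 by simp
  have x4: "x^4 \<le> x^4 * L" using L1 x3 by simp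
  have x2: "x^2 \<le> x^4" using x3 by (intro power_increasing) auto
  have pos5: "(2*x)^5 \<le> (2*x+1)^5" using x3 by (intro power_mono) auto
  have S0: "x^4 * L \<ge> 0" using L1 x3 by simp
  have "X - 2*(2*x)^5 \<le> 10000 * (x^4 * L)" using S0 up t1 p5 x4 by linarith
  moreover have "X - 2*(2*x)^5 \<ge> - 10000 * (x^4 * L)" using S0 lo sq pos5 x2 x4 by linarith
  ultimately show ?thesis unfolding X_def x_def L_def by (simp add: abs_le_iff)
qed

theorem proposition2p3:
  shows "(\<lambda>N::nat. real (card (Gamma (int N) - Gamma' (int N))) - 2 * (2 * real N) ^ 5)
           \<in> O(\<lambda>N. real N ^ 4 * ln (real N))"
proof (rule bigoI[where c = 10000])
  show "\<forall>\<^sub>F N in at_top. norm (real (card (Gamma (int N) - Gamma' (int N))) - 2 * (2 * real N) ^ 5)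
          \<le> 10000 * norm (real N ^ 4 * ln (real N))"
    unfolding eventually_at_top_linorder
  proof (intro exI[of _ 3] allI impI)
    fix N :: nat assume N: "N \<ge> 3"
    have "ln (real N) \<ge> 0" using N by simp
    then show "norm (real (card (Gamma (int N) - Gamma' (int N))) - 2 * (2 * real N) ^ 5)
          \<le> 10000 * norm (real N ^ 4 * ln (real N))"
      using main_bound[OF N] by simp
  qed
qed

end
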